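(* Let $A\in\mathbb{C}^{n\times n}$ with $\|A\|_F=1$, $\lambda\in\mathbb{C}$, and $v,v'\in\mathbb{C}^n$ nonzero with $Av=\lambda v$. If $3.6\,\mu(A,\lambda,v)\,d_{\mathbb{P}}(v,v')\le\varepsilon<1$, then $\frac{\mu(A,\lambda,v)}{1+\varepsilon}\le\mu(A,\lambda,v')\le\frac{\mu(A,\lambda,v)}{1-\varepsilon}$.
   Context: $\|\cdot\|_F$ is the Frobenius norm. $d_{\mathbb{P}}(v,v')=\arccos(|\langle v,v'\rangle|/(\|v\|\|v'\|))$. For $v\ne0$, $T_v=v^\perp$, $P_{v^\perp}$ the orthogonal projection onto $T_v$, $A_{\lambda,v}=P_{v^\perp}(A-\lambda\mathrm{Id})|_{T_v}$, and $\mu(A,\lambda,v)=\|A\|_F\|A_{\lambda,v}^{-1}\|$ (operator norm; $\infty$ if not invertible). *)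

theory Defs
  imports "HOL-Analysis.Analysis" "HOL-Library.Extended_Real"
begin

text \<open>Complex n-vectors are complex^'n, n x n complex matrices are complex^'n^'n.
  The norm on complex^'n is the Euclidean (2-)norm.\<close>

definition cinner :: "complex^'n \<Rightarrow> complex^'n \<Rightarrow> complex" where
  "cinner v w = (\<Sum>i\<in>UNIV. v$i * cnj (w$i))"

definition frob_norm :: "complex^'n^'n \<Rightarrow> real" where
  "frob_norm A = sqrt (\<Sum>i\<in>UNIV. \<Sum>j\<in>UNIV. (cmod (A$i$j))\<^sup>2)"

definition dP :: "complex^'n \<Rightarrow> complex^'n \<Rightarrow> real" where
  "dP v v' = arccos (cmod (cinner v v') / (norm v * norm v'))"

definition Tsp :: "complex^'n \<Rightarrow> (complex^'n) set" where
  "Tsp v = {w. cinner w v = 0}"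

definition Pperp :: "complex^'n \<Rightarrow> complex^'n \<Rightarrow> complex^'n" where
  "Pperp v x = x - (cinner x v / cinner v v) *s v"

definition Alv :: "complex^'n^'n \<Rightarrow> complex \<Rightarrow> complex^'n \<Rightarrow> complex^'n \<Rightarrow> complex^'n" where
  "Alv A lam v w = Pperp v (A *v w - lam *s w)"

text \<open>operator norm of a map on the subspace S (0 on the zero subspace)\<close>
definition opnorm_on :: "(complex^'n) set \<Rightarrow> (complex^'n \<Rightarrow> complex^'n) \<Rightarrow> real" where
  "opnorm_on S g = Sup (insert 0 {norm (g w) / norm w | w. w \<in> S \<and> w \<noteq> 0})"

definition mu :: "complex^'n^'n \<Rightarrow> complex \<Rightarrow> complex^'n \<Rightarrow> ereal" where
  "mu A lam v = (if bij_betw (Alv A lam v) (Tsp v) (Tsp v)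
     then ereal (frob_norm A * opnorm_on (Tsp v) (inv_into (Tsp v) (Alv A lam v)))
     else \<infinity>)"

end

theory Submission
  imports Defs
begin

lemma cinner_add_left: "cinner (x + y) z = cinner x z + cinner y z"
  by (simp add: cinner_def distrib_right sum.distrib)
lemma cinner_add_right: "cinner x (y + z) = cinner x y + cinner x z"
  by (simp add: cinner_def distrib_left sum.distrib)
lemma cinner_diff_left: "cinner (x - y) z = cinner x z - cinner y z"
  by (simp add: cinner_def left_diff_distrib sum_subtractf)
lemma cinner_diff_right: "cinner x (y - z) = cinner x y - cinner x z"
  by (simp add: cinner_def right_diff_distrib sum_subtractf)
lemma cinner_scale_left: "cinner (a *s x) z = a * cinner x z"
  by (simp add: cinner_def sum_distrib_left mult.assoc)
lemma cinner_scale_right: "cinner x (a *s z) = cnj a * cinner x z"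
  by (simp add: cinner_def sum_distrib_left mult.assoc mult.left_commute)
lemma cinner_scaleR_left: "cinner (r *\<^sub>R x) z = of_real r * cinner x z"
  unfolding cinner_def vector_scaleR_component by (simp add: sum_distrib_left mult.assoc scaleR_conv_of_real)
lemma cinner_zero_left[simp]: "cinner 0 z = 0"
  by (simp add: cinner_def)
lemma cinner_zero_right[simp]: "cinner z 0 = 0"
  by (simp add: cinner_def)
lemma cinner_commute: "cinner y x = cnj (cinner x y)"
  by (simp add: cinner_def mult.commute)
lemma norm_sq_vec: "(norm (x::complex^'n))^2 = (\<Sum>i\<in>UNIV. (cmod (x$i))^2)"
  by (simp add: norm_vec_def L2_set_def sum_nonneg)
lemma cinner_self: "cinner x x = complex_of_real ((norm x)^2)"
  by (simp add: cinner_def norm_sq_vec complex_norm_square[symmetric])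
lemma Re_cinner: "Re (cinner x y) = x \<bullet> y"
  by (simp add: cinner_def inner_vec_def inner_complex_def Re_sum)
lemma cinner_cs: "cmod (cinner x y) \<le> norm x * norm y"
proof -
  define a where "a = cinner x y"
  have "Re (cinner x (a *s y)) = (cmod a)^2"
    by (simp add: cinner_scale_right a_def complex_mult_cnj cmod_def power2_eq_square)
  hence "(cmod a)^2 \<le> norm x * norm (a *s y)"
    using norm_cauchy_schwarz[of x "a *s y"] by (simp add: Re_cinner)
  also have "norm (a *s y) = cmod a * norm y"
    by (simp add: norm_vec_def L2_set_def norm_mult power_mult_distrib sum_distrib_left[symmetric] real_sqrt_mult)
  finally have "cmod a * cmod a \<le> cmod a * (norm x * norm y)" by (simp add: power2_eq_square algebra_simps)
  thus ?thesis unfolding a_def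
    by (metis mult_le_cancel_left_pos norm_ge_zero order_le_less mult_nonneg_nonneg zero_less_norm_iff norm_zero)
qed
lemma norm_sq_Re: "(norm x)^2 = Re (cinner x x)"
  by (simp add: cinner_self)
lemma pythag: "cinner p q = 0 \<Longrightarrow> (norm (p + q))^2 = (norm p)^2 + (norm q)^2"
  by (simp add: norm_sq_Re cinner_add_left cinner_add_right cinner_commute[of p q])

lemma norm_scale: "norm (a *s (x::complex^'n)) = cmod a * norm x"
  by (simp add: norm_vec_def L2_set_def norm_mult power_mult_distrib sum_distrib_left[symmetric] real_sqrt_mult)

lemma cinner_self_eq0: "cinner v v = 0 \<longleftrightarrow> v = 0"
  by (simp add: cinner_self)

lemma Pperp_orth: "v \<noteq> 0 \<Longrightarrow> cinner (Pperp v x) v = 0"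
  by (simp add: Pperp_def cinner_diff_left cinner_scale_left cinner_self_eq0)

lemma Pperp_in: "v \<noteq> 0 \<Longrightarrow> Pperp v x \<in> Tsp v"
  by (simp add: Tsp_def Pperp_orth)

lemma Pperp_fix: "x \<in> Tsp v \<Longrightarrow> Pperp v x = x"
  by (simp add: Tsp_def Pperp_def)

lemma Pperp_add: "Pperp v (x + y) = Pperp v x + Pperp v y"
  by (simp add: Pperp_def cinner_add_left add_divide_distrib vector_sadd_rdistrib)

lemma Pperp_diff: "Pperp v (x - y) = Pperp v x - Pperp v y"
  by (simp add: Pperp_def cinner_diff_left diff_divide_distrib vector_sub_rdistrib)

lemma Pperp_scale: "Pperp v (a *s x) = a *s Pperp v x"
  by (simp add: Pperp_def cinner_scale_left vector_ssub_ldistrib)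

lemma Pperp_unit: "norm u = 1 \<Longrightarrow> Pperp u x = x - cinner x u *s u"
  by (simp add: Pperp_def cinner_self)

lemma Pperp_norm_sq: assumes "norm u = 1"
  shows "(norm (Pperp u x))^2 = (norm x)^2 - (cmod (cinner x u))^2"
proof -
  have u0: "u \<noteq> 0" using assms by auto
  have "x = Pperp u x + cinner x u *s u" using Pperp_unit[OF assms] by simp
  hence "(norm x)^2 = (norm (Pperp u x + cinner x u *s u))^2" by simp
  also have "\<dots> = (norm (Pperp u x))^2 + (norm (cinner x u *s u))^2"
    by (rule pythag) (simp add: cinner_scale_right Pperp_orth[OF u0])
  finally show ?thesis by (simp add: norm_scale assms)
qed

lemma Pperp_le: assumes "norm u = 1" shows "norm (Pperp u x) \<le> norm x"
proof -
  have "(norm (Pperp u x))^2 \<le> (norm x)^2" using Pperp_norm_sq[OF assms, of x] by simp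
  thus ?thesis by (simp add: power_mono_iff)
qed

lemma Tsp_scale: "k \<noteq> 0 \<Longrightarrow> Tsp (k *s v) = Tsp v"
  by (simp add: Tsp_def cinner_scale_right)

lemma Pperp_scale_v: assumes "k \<noteq> 0" shows "Pperp (k *s v) = Pperp v"
proof
  fix x
  have "cinner x (k *s v) / cinner (k *s v) (k *s v) *s (k *s v)
      = (cnj k * k) / (cnj k * k) * (cinner x v / cinner v v) *s v"
    by (simp add: cinner_scale_left cinner_scale_right vector_smult_assoc)
  also have "\<dots> = cinner x v / cinner v v *s v" using assms by simp
  finally show "Pperp (k *s v) x = Pperp v x" by (simp add: Pperp_def)
qed

lemma Alv_scale_v: "k \<noteq> 0 \<Longrightarrow> Alv A lam (k *s v) = Alv A lam v"
  by (simp add: Alv_def[abs_def] Pperp_scale_v)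

lemma mu_scale_v: "k \<noteq> 0 \<Longrightarrow> mu A lam (k *s v) = mu A lam v"
  by (simp add: mu_def Alv_scale_v Tsp_scale)

lemma subspace_Tsp: "subspace (Tsp v)"
  unfolding subspace_def Tsp_def by (simp add: cinner_add_left cinner_scaleR_left)

lemma linear_Pperp: "linear (Pperp v)"
  apply (rule linearI) apply (simp add: Pperp_add)
  by (metis Pperp_scale scaleR_conv_of_real vector_scalar_mult_def scaleR_vec_def
       vec_eq_iff vector_scaleR_component vector_smult_component)

lemma linear_smult: "linear (\<lambda>x::complex^'n. a *s x)"
  apply (rule linearI) apply (simp add: vector_add_ldistrib)
  by (simp add: vec_eq_iff scaleR_conv_of_real)

lemma linear_Alv: "linear (Alv A lam v)"
proof -
  have "linear (\<lambda>x. A *v x - lam *s x)"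
    by (intro linear_compose_sub matrix_vector_mul_linear linear_smult)
  hence "linear (Pperp v \<circ> (\<lambda>x. A *v x - lam *s x))"
    by (intro linear_compose linear_Pperp)
  thus ?thesis by (simp add: Alv_def[abs_def] o_def)
qed

lemma Alv_in: "v \<noteq> 0 \<Longrightarrow> Alv A lam v x \<in> Tsp v"
  by (simp add: Alv_def Pperp_in)

lemma frob_eq_norm: "frob_norm A = norm A"
  by (simp add: frob_norm_def norm_vec_def L2_set_def norm_sq_vec sum_nonneg)

lemma norm_cnjvec: "norm (\<chi> j. cnj ((x::complex^'n)$j)) = norm x"
  by (simp add: norm_vec_def)

lemma matvec_bound: "norm (A *v x) \<le> frob_norm A * norm x"
proof -
  have row: "(A *v x)$i = cinner (A$i) (\<chi> j. cnj (x$j))" for i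
    by (simp add: matrix_vector_mult_def cinner_def)
  have "(norm (A *v x))^2 = (\<Sum>i\<in>UNIV. (cmod ((A *v x)$i))^2)" by (rule norm_sq_vec)
  also have "\<dots> \<le> (\<Sum>i\<in>UNIV. (norm (A$i))^2 * (norm x)^2)"
  proof (rule sum_mono)
    fix i
    have "cmod ((A *v x)$i) \<le> norm (A$i) * norm x"
      using cinner_cs[of "A$i" "\<chi> j. cnj (x$j)"] by (simp add: row norm_cnjvec)
    thus "(cmod ((A *v x)$i))^2 \<le> (norm (A$i))^2 * (norm x)^2"
      by (metis power_mono power_mult_distrib norm_ge_zero)
  qed
  also have "\<dots> = (norm A * norm x)^2"
    by (simp add: sum_distrib_right[symmetric] power_mult_distrib norm_vec_def L2_set_def sum_nonneg)
  finally show ?thesis by (simp add: frob_eq_norm power_mono_iff)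
qed

lemma bij_from_inj:
  fixes f :: "complex^'n \<Rightarrow> complex^'n"
  assumes "linear f" "subspace S" "f ` S \<subseteq> S" "inj_on f S"
  shows "bij_betw f S S"
proof -
  have sp: "span S = S" using assms(2) by (simp add: span_eq_iff)
  have "dim (f ` S) = dim S" using dim_image_eq[OF assms(1), of S] assms(4) sp by simp
  moreover have "subspace (f ` S)" using linear_subspace_image[OF assms(1,2)] .
  ultimately have "f ` S = S" using subspace_dim_equal[of "f ` S" S] assms(2,3) by simp
  thus ?thesis using assms(4) by (simp add: bij_betw_def)
qed

lemma opnorm_le:
  assumes "K \<ge> 0" "\<And>w. w \<in> S \<Longrightarrow> norm (g w) \<le> K * norm w"
  shows "opnorm_on S g \<le> K"
  unfolding opnorm_on_def
proof (rule cSup_least)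
  fix x assume "x \<in> insert 0 {norm (g w) / norm w |w. w \<in> S \<and> w \<noteq> 0}"
  then show "x \<le> K"
  proof
    assume "x = 0" thus ?thesis using assms by simp
  next
    assume "x \<in> {norm (g w) / norm w |w. w \<in> S \<and> w \<noteq> 0}"
    then obtain w where "w \<in> S" "w \<noteq> 0" "x = norm (g w) / norm w" by auto
    thus ?thesis using assms(2)[of w] by (simp add: divide_le_eq)
  qed
qed simp

lemma opnorm_upper:
  assumes "\<And>w. w \<in> S \<Longrightarrow> norm (g w) \<le> K * norm w"
  shows "opnorm_on S g \<ge> 0" "\<And>w. w \<in> S \<Longrightarrow> norm (g w) \<le> opnorm_on S g * norm w"
proof -
  let ?X = "insert 0 {norm (g w) / norm w |w. w \<in> S \<and> w \<noteq> 0}"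
  have bdd: "bdd_above ?X"
  proof (rule bdd_aboveI[of _ "max 0 K"])
    fix x assume "x \<in> ?X"
    then show "x \<le> max 0 K"
    proof
      assume "x \<in> {norm (g w) / norm w |w. w \<in> S \<and> w \<noteq> 0}"
      then obtain w where "w \<in> S" "w \<noteq> 0" "x = norm (g w) / norm w" by auto
      moreover have "K * norm w \<le> max 0 K * norm w" by (simp add: mult_right_mono)
      ultimately have "norm (g w) \<le> max 0 K * norm w" using assms[of w] by linarith
      thus ?thesis using \<open>x = _\<close> \<open>w \<noteq> 0\<close> by (simp add: divide_le_eq)
    qed simp
  qed
  show "opnorm_on S g \<ge> 0" unfolding opnorm_on_def by (rule cSup_upper[OF _ bdd]) simp
  fix w assume w: "w \<in> S"
  show "norm (g w) \<le> opnorm_on S g * norm w"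
  proof (cases "w = 0")
    case True
    have "norm (g w) \<le> K * norm w" using assms w by blast
    with True show ?thesis by simp
  next
    case False
    have "norm (g w) / norm w \<le> opnorm_on S g" unfolding opnorm_on_def
      by (rule cSup_upper[OF _ bdd]) (use w False in auto)
    thus ?thesis using False by (simp add: divide_le_eq)
  qed
qed

lemma inv_bounded:
  fixes f :: "complex^'n \<Rightarrow> complex^'n"
  assumes u: "u \<noteq> 0" and f: "linear f" and b: "bij_betw f (Tsp u) (Tsp u)"
  shows "\<exists>K. \<forall>t\<in>Tsp u. norm (inv_into (Tsp u) f t) \<le> K * norm t"
proof -
  let ?T = "Tsp u" let ?i = "inv_into ?T f"
  have inj: "inj_on f ?T" and img: "f ` ?T = ?T" using b by (auto simp: bij_betw_def)
  have iin: "?i t \<in> ?T" if "t \<in> ?T" for t using inv_into_into[of t f ?T] img that by simp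
  have fi: "f (?i t) = t" if "t \<in> ?T" for t using f_inv_into_f[of t f ?T] img that by simp
  have sub: "subspace ?T" by (rule subspace_Tsp)
  have iadd: "?i (p + q) = ?i p + ?i q" if "p \<in> ?T" "q \<in> ?T" for p q
  proof -
    have "f (?i p + ?i q) = p + q" using linear_add[OF f] fi that by simp
    moreover have "?i p + ?i q \<in> ?T" using subspace_add[OF sub] iin that by blast
    ultimately show ?thesis using inv_into_f_f[OF inj] by metis
  qed
  have iscale: "?i (r *\<^sub>R p) = r *\<^sub>R ?i p" if "p \<in> ?T" for p r
  proof -
    have "f (r *\<^sub>R ?i p) = r *\<^sub>R p" using linear_scale[OF f] fi that by simp
    moreover have "r *\<^sub>R ?i p \<in> ?T" using subspace_mul[OF sub] iin that by blast
    ultimately show ?thesis using inv_into_f_f[OF inj] by metis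
  qed
  have lin: "linear (\<lambda>x. ?i (Pperp u x))"
    apply (rule linearI)
     apply (simp add: Pperp_add iadd Pperp_in u)
    by (simp add: linear_scale[OF linear_Pperp] iscale Pperp_in u)
  obtain K where K: "\<And>x. norm (?i (Pperp u x)) \<le> K * norm x"
    using linear_bounded[OF lin] by blast
  show ?thesis using K Pperp_fix by metis
qed

definition Bop :: "complex^'n^'n \<Rightarrow> complex \<Rightarrow> complex^'n \<Rightarrow> complex^'n" where
  "Bop A lam x = A *v x - lam *s x"

lemma Alv_Bop: "Alv A lam v x = Pperp v (Bop A lam x)"
  by (simp add: Alv_def Bop_def)

lemma Bop_diff: "Bop A lam (x - y) = Bop A lam x - Bop A lam y"
  by (simp add: Bop_def matrix_vector_mult_diff_distrib vector_ssub_ldistrib)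

lemma Bop_scale: "Bop A lam (a *s x) = a *s Bop A lam x"
  by (simp add: Bop_def vector_scalar_commute vector_ssub_ldistrib vector_smult_assoc mult.commute)

lemma lam_le1: assumes "frob_norm A = 1" "norm u = 1" "A *v u = lam *s u"
  shows "cmod lam \<le> 1"
  using matvec_bound[of A u] assms by (simp add: norm_scale)

lemma Bop_bound: assumes "frob_norm A = 1" "norm u = 1" "A *v u = lam *s u"
  shows "norm (Bop A lam x) \<le> 2 * norm x"
proof -
  have "norm (Bop A lam x) \<le> norm (A *v x) + norm (lam *s x)" unfolding Bop_def by (rule norm_triangle_ineq4)
  also have "\<dots> \<le> norm x + norm x"
    using matvec_bound[of A x] assms lam_le1[OF assms] by (intro add_mono) (auto simp: norm_scale mult_left_le_one_le)
  finally show ?thesis by simp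
qed

lemma Bop_u: "A *v u = lam *s u \<Longrightarrow> Bop A lam u = 0"
  by (simp add: Bop_def)

lemma Alv_proj: assumes "norm u = 1" "A *v u = lam *s u"
  shows "Alv A lam u (Pperp u x) = Pperp u (Bop A lam x)"
  using assms by (simp add: Alv_Bop Pperp_unit Bop_diff Bop_scale Bop_u)

lemma cinner_unit: "norm u = 1 \<Longrightarrow> cinner u u = 1"
  by (simp add: cinner_self)

lemma key_ident: assumes "norm w = 1"
  shows "Pperp u (Alv A lam w x) = Pperp u (Bop A lam x) - cinner (Bop A lam x) w *s Pperp u w"
  using assms by (simp add: Alv_Bop Pperp_unit[of w] Pperp_diff Pperp_scale)

lemma sval: assumes "norm u = 1" "norm w = 1"
  shows "(norm (Pperp u w))^2 = 1 - (cmod (cinner u w))^2"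
        "(norm (Pperp w u))^2 = 1 - (cmod (cinner u w))^2"
  using Pperp_norm_sq[OF assms(1), of w] Pperp_norm_sq[OF assms(2), of u] assms
  by (simp_all add: cinner_commute[of w u])

lemma inner_Tw_bound: assumes "norm u = 1" "norm w = 1" "x \<in> Tsp w"
  shows "cmod (cinner x u) \<le> norm (Pperp u w) * norm x"
proof -
  have xw: "cinner x w = 0" using assms(3) by (simp add: Tsp_def)
  have "cinner x (Pperp w u) = cinner x u"
    by (simp add: Pperp_unit[OF assms(2)] cinner_diff_right cinner_scale_right xw)
  moreover have "norm (Pperp w u) = norm (Pperp u w)"
    using sval[OF assms(1,2)] by (metis norm_ge_zero power2_eq_iff_nonneg)
  ultimately show ?thesis using cinner_cs[of x "Pperp w u"] by (simp add: mult.commute)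
qed

lemma proj_lower: assumes "norm u = 1" "norm w = 1" "x \<in> Tsp w"
  shows "cmod (cinner u w) * norm x \<le> norm (Pperp u x)"
proof -
  let ?s = "norm (Pperp u w)" let ?c = "cmod (cinner u w)"
  have "(cmod (cinner x u))^2 \<le> (?s * norm x)^2"
    using inner_Tw_bound[OF assms] by (simp add: power_mono)
  hence "(?c * norm x)^2 \<le> (norm (Pperp u x))^2"
    using Pperp_norm_sq[OF assms(1), of x] sval(1)[OF assms(1,2)]
    by (simp add: power_mult_distrib algebra_simps)
  thus ?thesis by (simp add: power_mono_iff)
qed

lemma lift: assumes "norm u = 1" "norm w = 1" "t \<in> Tsp u" "cinner u w \<noteq> 0"
  defines "L \<equiv> t - (cinner t w / cinner u w) *s u"
  shows "L \<in> Tsp w" "Pperp u L = t" "cmod (cinner u w) * norm L \<le> norm t"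
proof -
  show Lw: "L \<in> Tsp w" using assms(4)
    by (simp add: Tsp_def L_def cinner_diff_left cinner_scale_left)
  have tu: "cinner t u = 0" using assms(3) by (simp add: Tsp_def)
  show P: "Pperp u L = t"
    by (simp add: Pperp_unit[OF assms(1)] L_def cinner_diff_left cinner_scale_left tu cinner_unit[OF assms(1)])
  show "cmod (cinner u w) * norm L \<le> norm t" using proj_lower[OF assms(1,2) Lw] P by simp
qed

lemma cos_lower: "0 \<le> x \<Longrightarrow> 1 - x^2/2 \<le> cos (x::real)"
proof -
  assume "0 \<le> x"
  have "\<bar>sin (x/2)\<bar> \<le> \<bar>x/2\<bar>" by (rule abs_sin_x_le_abs_x)
  hence "(sin (x/2))^2 \<le> (x/2)^2" by (metis power2_abs abs_ge_zero power_mono)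
  moreover have "cos x = 1 - 2 * (sin (x/2))^2" using cos_double_sin[of "x/2"] by simp
  ultimately show ?thesis by (simp add: power_divide)
qed

lemma scalar_ineqs:
  fixes m tt ee c s :: real
  assumes m: "m \<ge> 1/2" and tt: "tt \<ge> 0" and h: "36/10 * m * tt \<le> ee" and e: "ee < 1"
    and c: "c \<ge> 1 - tt^2/2" and s: "s \<le> tt" "s \<ge> 0"
  shows "1 - c + 2* m * s \<le> ee" "1 + 2* m * s \<le> (1+ee) * c" "c > 0" "ee \<ge> 0"
proof -
  have mth: "m * tt < 1/3.6" using h e by simp
  have "tt * 1 \<le> tt * (2*m)" using m tt by (intro mult_left_mono) auto
  hence tt1: "tt \<le> 1/1.8" using mth by (simp add: algebra_simps)
  have ttm: "tt \<le> 1.6 * m"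
  proof -
    have "tt * (3.6 * m) \<le> 1" using mth by (simp add: algebra_simps)
    moreover have "(1/2)*(1/2) \<le> m*m" by (rule mult_mono) (use m in auto)
    hence "1.6 * m * (3.6*m) \<ge> 1" by (simp add: algebra_simps)
    ultimately have "tt * (3.6*m) \<le> 1.6 * m * (3.6*m)" by linarith
    thus ?thesis using m by (simp add: mult_right_le_imp_le)
  qed
  have ms: "m * s \<le> m * tt" using s m by (simp add: mult_left_mono)
  have "tt * tt \<le> (1.6 * m) * tt" using ttm tt by (rule mult_right_mono)
  hence sq: "tt^2 \<le> 1.6 * m * tt" by (simp add: power2_eq_square)
  have assoc: "2 * m * s = 2 * (m * s)" "36/10*m*tt = 36/10*(m*tt)" "16/10*m*tt = 16/10*(m*tt)" by simp_all
  have mt0: "m * tt \<ge> 0" using m tt by simp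
  show "1 - c + 2* m * s \<le> ee" using c ms sq h assoc mt0 by linarith
  have "(1+ee) * c \<ge> (1+ee) * (1 - tt^2/2)"
    using c h m tt by (intro mult_left_mono) (auto intro: order_trans[of 0 "36/10 * m * tt"])
  moreover have "(1+ee) * (1 - tt^2/2) \<ge> 1 + ee - tt^2"
  proof -
    have q: "(1+ee) * tt^2 \<le> 2 * tt^2" using e by (intro mult_right_mono) auto
    have "(1+ee) * (1 - tt^2/2) = 1 + ee - (1+ee) * tt^2 / 2" by (simp add: algebra_simps)
    with q show ?thesis by linarith
  qed
  ultimately show "1 + 2* m * s \<le> (1+ee) * c" using ms sq h assoc mt0 by linarith
  have "tt^2 \<le> (1/1.8)^2" using power_mono[OF tt1 tt, of 2] .
  thus "c > 0" using c by (simp add: power_divide)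
  show "ee \<ge> 0" using h mt0 by linarith
qed

lemma main_est:
  fixes A :: "complex^'n^'n"
  assumes fA: "frob_norm A = 1" and nu: "norm u = 1" and nw: "norm w = 1"
    and eig: "A *v u = lam *s u"
    and bu: "bij_betw (Alv A lam u) (Tsp u) (Tsp u)"
    and mdef: "m = opnorm_on (Tsp u) (inv_into (Tsp u) (Alv A lam u))"
    and t0: "t0 \<in> Tsp u" "t0 \<noteq> 0"
    and h: "36/10 * m * arccos (cmod (cinner u w)) \<le> ee" and e: "ee < 1"
  shows "bij_betw (Alv A lam w) (Tsp w) (Tsp w)
    \<and> opnorm_on (Tsp w) (inv_into (Tsp w) (Alv A lam w)) \<le> m / (1 - ee)
    \<and> m \<le> (1 + ee) * opnorm_on (Tsp w) (inv_into (Tsp w) (Alv A lam w))"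
proof -
  let ?Mu = "Alv A lam u" and ?Mw = "Alv A lam w" and ?Tu = "Tsp u" and ?Tw = "Tsp w"
  let ?iu = "inv_into ?Tu ?Mu" and ?iw = "inv_into ?Tw ?Mw"
  let ?B = "Bop A lam"
  have u0: "u \<noteq> 0" using nu by auto
  have w0: "w \<noteq> 0" using nw by auto
  have inju: "inj_on ?Mu ?Tu" and imgu: "?Mu ` ?Tu = ?Tu" using bu by (auto simp: bij_betw_def)
  obtain K where K: "\<forall>t\<in>?Tu. norm (?iu t) \<le> K * norm t"
    using inv_bounded[OF u0 linear_Alv bu] by blast
  have m0: "m \<ge> 0" and iu_bd: "\<And>t. t \<in> ?Tu \<Longrightarrow> norm (?iu t) \<le> m * norm t"
    using opnorm_upper[of ?Tu ?iu K] K mdef by auto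
  have iu_in: "?iu t \<in> ?Tu" if "t \<in> ?Tu" for t using inv_into_into[of t ?Mu ?Tu] imgu that by simp
  have Mu_iu: "?Mu (?iu t) = t" if "t \<in> ?Tu" for t using f_inv_into_f[of t ?Mu ?Tu] imgu that by simp
  have low_u: "norm y \<le> m * norm (?Mu y)" if "y \<in> ?Tu" for y
    using iu_bd[OF Alv_in[OF u0, of A lam y]] inv_into_f_f[OF inju that] by simp
  have Bb: "norm (?B x) \<le> 2 * norm x" for x by (rule Bop_bound[OF fA nu eig])
  have mhalf: "m \<ge> 1/2"
  proof -
    let ?z = "?iu t0"
    have "norm t0 = norm (?Mu ?z)" using Mu_iu[OF t0(1)] by simp
    also have "\<dots> \<le> norm (?B ?z)" by (simp add: Alv_Bop Pperp_le[OF nu])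
    also have "\<dots> \<le> 2 * norm ?z" by (rule Bb)
    also have "\<dots> \<le> 2 * (m * norm t0)" using iu_bd[OF t0(1)] by simp
    finally have "norm t0 * 1 \<le> norm t0 * (2 * m)" by (simp add: algebra_simps)
    thus ?thesis using t0(2) by (simp add: mult_le_cancel_left_pos)
  qed
  define c where "c = cmod (cinner u w)"
  define s where "s = norm (Pperp u w)"
  define tt where "tt = arccos c"
  have c1: "c \<le> 1" using cinner_cs[of u w] nu nw by (simp add: c_def)
  have c0: "c \<ge> 0" by (simp add: c_def)
  have s2: "s^2 = 1 - c^2" using sval(1)[OF nu nw] by (simp add: s_def c_def)
  have s0: "s \<ge> 0" by (simp add: s_def)
  have s_eq: "s = sin tt" using sin_arccos[of c] c0 c1 s2 s0
    by (simp add: tt_def) (metis real_sqrt_unique)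
  have tt0: "tt \<ge> 0" using c0 c1 by (simp add: tt_def arccos_lbound)
  have s_tt: "s \<le> tt" using sin_x_le_x[OF tt0] s_eq by simp
  have c_cos: "c = cos tt" using cos_arccos[of c] c0 c1 by (simp add: tt_def)
  have cl: "c \<ge> 1 - tt^2/2" using cos_lower[OF tt0] c_cos by simp
  have hh: "36/10 * m * tt \<le> ee" using h by (simp add: tt_def c_def)
  note S = scalar_ineqs[OF mhalf tt0 hh e cl s_tt s0]
  have cnz: "cinner u w \<noteq> 0" using S(3) by (auto simp: c_def)
  define r where "r x = cinner (?B x) w *s Pperp u w" for x
  have r_bd: "norm (r x) \<le> 2 * s * norm x" for x
  proof -
    have "norm (r x) = cmod (cinner (?B x) w) * s" by (simp add: r_def norm_scale s_def)
    also have "\<dots> \<le> (norm (?B x) * 1) * s"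
      using cinner_cs[of "?B x" w] nw s0 by (intro mult_right_mono) auto
    also have "\<dots> \<le> (2 * norm x) * s" using Bb[of x] s0 by (intro mult_right_mono) auto
    finally show ?thesis by (simp add: algebra_simps)
  qed
  have key: "Pperp u (?Mw x) = ?Mu (Pperp u x) - r x" for x
    using key_ident[OF nw, of u A lam x] Alv_proj[OF nu eig, of x] by (simp add: r_def)
  have low_w: "(1 - ee) * norm x \<le> m * norm (?Mw x)" if x: "x \<in> ?Tw" for x
  proof -
    have Px: "Pperp u x \<in> ?Tu" by (rule Pperp_in[OF u0])
    have "norm (?Mu (Pperp u x)) = norm (Pperp u (?Mw x) + r x)" using key[of x] by simp
    also have "\<dots> \<le> norm (Pperp u (?Mw x)) + norm (r x)" by (rule norm_triangle_ineq)
    also have "\<dots> \<le> norm (?Mw x) + 2 * s * norm x" using Pperp_le[OF nu] r_bd by (intro add_mono)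
    finally have a: "norm (?Mu (Pperp u x)) \<le> norm (?Mw x) + 2 * s * norm x" .
    have "c * norm x \<le> norm (Pperp u x)" using proj_lower[OF nu nw x] by (simp add: c_def)
    also have "\<dots> \<le> m * norm (?Mu (Pperp u x))" by (rule low_u[OF Px])
    also have "\<dots> \<le> m * (norm (?Mw x) + 2 * s * norm x)" using a m0 by (rule mult_left_mono)
    finally have b: "c * norm x \<le> m * norm (?Mw x) + (2 * m * s) * norm x" by (simp add: algebra_simps)
    have "(1 - ee) * norm x \<le> (c - 2 * m * s) * norm x" using S(1) by (intro mult_right_mono) auto
    thus ?thesis using b by (simp add: algebra_simps)
  qed
  have injw: "inj_on ?Mw ?Tw"
  proof (rule inj_onI)
    fix x y assume x: "x \<in> ?Tw" and y: "y \<in> ?Tw" and eq: "?Mw x = ?Mw y"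
    have xy: "x - y \<in> ?Tw" using subspace_diff[OF subspace_Tsp x y] .
    have "?Mw (x - y) = ?Mw x - ?Mw y" by (rule linear_diff[OF linear_Alv])
    hence "?Mw (x - y) = 0" using eq by simp
    hence "(1 - ee) * norm (x - y) \<le> 0" using low_w[OF xy] by simp
    hence "norm (x - y) \<le> 0" using e by (simp add: mult_le_0_iff)
    thus "x = y" by simp
  qed
  have bw: "bij_betw ?Mw ?Tw ?Tw"
    by (rule bij_from_inj[OF linear_Alv subspace_Tsp _ injw]) (auto simp: Alv_in[OF w0])
  have imgw: "?Mw ` ?Tw = ?Tw" using bw by (auto simp: bij_betw_def)
  have iw_in: "?iw t \<in> ?Tw" if "t \<in> ?Tw" for t using inv_into_into[of t ?Mw ?Tw] imgw that by simp
  have Mw_iw: "?Mw (?iw t) = t" if "t \<in> ?Tw" for t using f_inv_into_f[of t ?Mw ?Tw] imgw that by simp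
  obtain K' where K': "\<forall>t\<in>?Tw. norm (?iw t) \<le> K' * norm t"
    using inv_bounded[OF w0 linear_Alv bw] by blast
  define m' where "m' = opnorm_on ?Tw ?iw"
  have m'0: "m' \<ge> 0" and iw_bd: "\<And>t. t \<in> ?Tw \<Longrightarrow> norm (?iw t) \<le> m' * norm t"
    using opnorm_upper[of ?Tw ?iw K'] K' m'_def by auto
  have up: "m' \<le> m / (1 - ee)" unfolding m'_def
  proof (rule opnorm_le)
    show "0 \<le> m / (1 - ee)" using m0 e by simp
    fix t assume t: "t \<in> ?Tw"
    have "(1 - ee) * norm (?iw t) \<le> m * norm t" using low_w[OF iw_in[OF t]] Mw_iw[OF t] by simp
    thus "norm (?iw t) \<le> m / (1 - ee) * norm t" using e by (simp add: field_simps)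
  qed
  have lo: "m \<le> (1 + ee) * m'" unfolding mdef
  proof (rule opnorm_le)
    show "0 \<le> (1 + ee) * m'" using m'0 S(4) by simp
    fix t assume t: "t \<in> ?Tu"
    define z where "z = ?iu t"
    have z: "z \<in> ?Tu" "?Mu z = t" using iu_in[OF t] Mu_iu[OF t] by (simp_all add: z_def)
    define L where "L = t - (cinner t w / cinner u w) *s u"
    note Lf = lift[OF nu nw t cnz, folded L_def]
    define x where "x = ?iw L"
    have x: "x \<in> ?Tw" "?Mw x = L" using iw_in[OF Lf(1)] Mw_iw[OF Lf(1)] by (simp_all add: x_def)
    have xL: "norm x \<le> m' * norm L" using iw_bd[OF Lf(1)] by (simp add: x_def)
    define y where "y = Pperp u x"
    have y: "y \<in> ?Tu" by (simp add: y_def Pperp_in[OF u0])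
    have "?Mu y = t + r x" using key[of x] x(2) Lf(2) by (simp add: y_def)
    moreover have "?Mu (y - z) = ?Mu y - ?Mu z" by (rule linear_diff[OF linear_Alv])
    ultimately have "?Mu (y - z) = r x" using z(2) by simp
    hence "norm (y - z) \<le> m * norm (r x)" using low_u[OF subspace_diff[OF subspace_Tsp y z(1)]] by simp
    also have "\<dots> \<le> m * (2 * s * norm x)" using r_bd m0 by (rule mult_left_mono)
    finally have yz: "norm (y - z) \<le> (2 * m * s) * norm x" by (simp add: algebra_simps)
    have "norm z \<le> norm y + norm (y - z)" using norm_triangle_ineq4[of y "y - z"] by simp
    also have "norm y \<le> norm x" using Pperp_le[OF nu] by (simp add: y_def)
    finally have "norm z \<le> (1 + 2 * m * s) * norm x" using yz by (simp add: algebra_simps)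
    also have "\<dots> \<le> ((1 + ee) * c) * norm x" using S(2) by (intro mult_right_mono) auto
    also have "\<dots> = (1 + ee) * (c * norm x)" by simp
    also have "\<dots> \<le> (1 + ee) * (m' * norm t)"
    proof (rule mult_left_mono)
      have "c * norm x \<le> c * (m' * norm L)" using xL c0 by (rule mult_left_mono)
      also have "\<dots> = m' * (c * norm L)" by simp
      also have "\<dots> \<le> m' * norm t" using Lf(3) m'0 by (intro mult_left_mono) (auto simp: c_def)
      finally show "c * norm x \<le> m' * norm t" .
      show "0 \<le> 1 + ee" using S(4) by simp
    qed
    finally show "norm (?iu t) \<le> (1 + ee) * m' * norm t" by (simp add: z_def mult.assoc)
  qed
  show ?thesis using bw up lo by (simp add: m'_def)
qed

lemma mu_nonneg: assumes "x \<noteq> 0" shows "mu A lam x \<ge> 0"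
proof (cases "bij_betw (Alv A lam x) (Tsp x) (Tsp x)")
  case True
  obtain K where K: "\<forall>t\<in>Tsp x. norm (inv_into (Tsp x) (Alv A lam x) t) \<le> K * norm t"
    using inv_bounded[OF assms linear_Alv True] by blast
  have "opnorm_on (Tsp x) (inv_into (Tsp x) (Alv A lam x)) \<ge> 0"
    using opnorm_upper(1)[of "Tsp x" _ K] K by blast
  moreover have "frob_norm A \<ge> 0" by (simp add: frob_norm_def sum_nonneg)
  ultimately show ?thesis using True by (simp add: mu_def)
qed (simp add: mu_def)

theorem lemma4p4:
  fixes A :: "complex^'n^'n" and lam :: complex and v v' :: "complex^'n" and \<epsilon> :: real
  assumes "frob_norm A = 1"
    and "v \<noteq> 0" and "v' \<noteq> 0"
    and "A *v v = lam *s v"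
    and "ereal (36/10) * mu A lam v * ereal (dP v v') \<le> ereal \<epsilon>"
    and "\<epsilon> < 1"
  shows "mu A lam v / ereal (1 + \<epsilon>) \<le> mu A lam v'
    \<and> mu A lam v' \<le> mu A lam v / ereal (1 - \<epsilon>)"
proof -
  define a where "a = complex_of_real (1 / norm v)"
  define b where "b = complex_of_real (1 / norm v')"
  define u where "u = a *s v"
  define w where "w = b *s v'"
  have a0: "a \<noteq> 0" and b0: "b \<noteq> 0" using assms(2,3) by (simp_all add: a_def b_def)
  have nu: "norm u = 1" using assms(2) by (simp add: u_def a_def norm_scale norm_divide)
  have nw: "norm w = 1" using assms(3) by (simp add: w_def b_def norm_scale norm_divide)
  have u0: "u \<noteq> 0" and w0: "w \<noteq> 0" using nu nw by auto
  have mu_u: "mu A lam u = mu A lam v" by (simp add: u_def mu_scale_v[OF a0])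
  have mu_w: "mu A lam w = mu A lam v'" by (simp add: w_def mu_scale_v[OF b0])
  have eig: "A *v u = lam *s u" using assms(4)
    by (simp add: u_def vector_scalar_commute vector_smult_assoc mult.commute)
  define c where "c = cmod (cinner u w)"
  have "cinner u w = a * b * cinner v v'"
    by (simp add: u_def w_def cinner_scale_left cinner_scale_right a_def b_def)
  hence "c = cmod (cinner v v') / (norm v * norm v')"
    by (simp add: c_def a_def b_def norm_mult norm_divide)
  hence dPe: "dP v v' = arccos c" by (simp add: dP_def)
  have c1: "c \<le> 1" using cinner_cs[of u w] nu nw by (simp add: c_def)
  have c0: "c \<ge> 0" by (simp add: c_def)
  have tt0: "arccos c \<ge> 0" using c0 c1 by (simp add: arccos_lbound)
  have hyp: "ereal (36/10) * mu A lam u * ereal (arccos c) \<le> ereal \<epsilon>"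
    using assms(5) by (simp add: mu_u dPe)
  have "0 \<le> ereal (36/10) * mu A lam u * ereal (arccos c)"
    using mu_nonneg[OF u0] tt0 by simp
  hence "0 \<le> ereal \<epsilon>" using hyp by (rule order_trans)
  hence e0: "\<epsilon> \<ge> 0" by simp
  have e1: "\<epsilon> < 1" by (rule assms(6))
  show ?thesis
  proof (cases "Pperp u w = 0")
    case True
    define k where "k = cinner w u"
    have wk: "w = k *s u" using True Pperp_unit[OF nu, of w] by (simp add: k_def)
    have k0: "k \<noteq> 0" using w0 wk by auto
    have eq: "mu A lam v' = mu A lam v" using mu_w mu_u wk mu_scale_v[OF k0, of A lam u] by simp
    have M0: "mu A lam v \<ge> 0" using mu_nonneg[OF assms(2)] .
    show ?thesis
    proof (cases "mu A lam v")
      case (real r)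
      have r0: "r \<ge> 0" using M0 real by simp
      have re: "r * \<epsilon> \<ge> 0" using r0 e0 by simp
      have "r / (1 + \<epsilon>) \<le> r" using re e0 by (simp add: divide_le_eq algebra_simps)
      moreover have "r \<le> r / (1 - \<epsilon>)" using re e1 by (simp add: le_divide_eq algebra_simps)
      ultimately show ?thesis using eq real e0 e1 by simp
    next
      case PInf thus ?thesis using eq e0 e1 by simp
    next
      case MInf thus ?thesis using M0 by simp
    qed
  next
    case False
    have s2: "(norm (Pperp u w))^2 = 1 - c^2" using sval(1)[OF nu nw] by (simp add: c_def)
    have "norm (Pperp u w) > 0" using False by simp
    hence "(norm (Pperp u w))^2 > 0" by simp
    hence c2: "c^2 < 1" using s2 by linarith
    have cl1: "c < 1"
    proof (rule ccontr)
      assume "\<not> c < 1"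
      hence "1 \<le> c^2" using one_le_power[of c 2] by simp
      thus False using c2 by simp
    qed
    have ttp: "arccos c > 0"
    proof (rule ccontr)
      assume "\<not> arccos c > 0"
      hence "arccos c = 0" using tt0 by simp
      hence "cos (arccos c) = 1" by simp
      thus False using cos_arccos[of c] c0 c1 cl1 by simp
    qed
    have bu: "bij_betw (Alv A lam u) (Tsp u) (Tsp u)"
    proof (rule ccontr)
      assume "\<not> ?thesis"
      hence "mu A lam u = \<infinity>" by (simp add: mu_def)
      thus False using hyp ttp by simp
    qed
    define m where "m = opnorm_on (Tsp u) (inv_into (Tsp u) (Alv A lam u))"
    have mu_um: "mu A lam u = ereal m" using bu assms(1) by (simp add: mu_def m_def)
    have hh: "36/10 * m * arccos (cmod (cinner u w)) \<le> \<epsilon>"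
      using hyp by (simp add: mu_um c_def)
    note R = main_est[OF assms(1) nu nw eig bu m_def Pperp_in[OF u0] False hh e1]
    define m' where "m' = opnorm_on (Tsp w) (inv_into (Tsp w) (Alv A lam w))"
    have mu_wm: "mu A lam w = ereal m'" using R assms(1) by (simp add: mu_def m'_def)
    have up: "m' \<le> m / (1 - \<epsilon>)" using R by (simp add: m'_def)
    have lo: "m \<le> (1 + \<epsilon>) * m'" using R by (simp add: m'_def)
    have lo': "m / (1 + \<epsilon>) \<le> m'" using lo e0 by (simp add: divide_le_eq mult.commute)
    show ?thesis using up lo' e0 e1 mu_um mu_wm mu_u mu_w by simp
  qed
qed

end
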